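(* For Dallal's model, reparameterize by $(\gamma,U,V)$ with $U=(1+\gamma)\lambda_0$ and $V=(1+\gamma)\lambda_1$; this maps $\Omega$ bijectively onto $(0,1)^3$. Jeffreys' prior in the parameterization $(\gamma,U,V)$ is $$\pi_J(\gamma,u,v)\propto \frac{\gamma^{-1/2}(1-\gamma)^{-1/2}}{1+\gamma}\,(u+rv)^{1/2}\,u^{-1/2}(1-u)^{-1/2}\,v^{-1/2}(1-v)^{-1/2},\qquad 0<\gamma,u,v<1,$$ and this prior is proper. Moreover, under $\pi_J$ the parameter $\gamma$ is independent of $(U,V)$ and its marginal prior density is $$\pi_J(\gamma)=\frac{\sqrt2}{\pi}\,\frac{\gamma^{-1/2}(1-\gamma)^{-1/2}}{1+\gamma},\qquad 0<\gamma<1 .$$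
   Context: Dallal's model for bilateral data. There are two groups, $i=1$ (treatment) and $i=0$ (control), with fixed sample sizes $m_{+1},m_{+0}\ge 1$. For each group $i$, the counts $(m_{0i},m_{1i},m_{2i})$, where $m_{hi}$ is the number of subjects in group $i$ with exactly $h$ of two sites cured and $m_{0i}+m_{1i}+m_{2i}=m_{+i}$, follow a trinomial (multinomial) distribution with $m_{+i}$ trials and cell probabilities $p_{0i}=1-(1+\gamma)\lambda_i$, $p_{1i}=2\gamma\lambda_i$, $p_{2i}=(1-\gamma)\lambda_i$. The two groups are independent. The parameter space is $\Omega=\{(\gamma,\lambda_0,\lambda_1):0<\gamma<1,\ 0<\lambda_0,\lambda_1<1/(1+\gamma)\}$. Write $m_{1+}=m_{10}+m_{11}$, $m_{2+}=m_{20}+m_{21}$, $m_{0+}=m_{00}+m_{01}$, and $r=m_{+1}/m_{+0}$. Jeffreys' prior for a given parameterization is the density proportional to the square root of the determinant of the expected Fisher information matrix of this product-trinomial model (with $m_{+0},m_{+1}$ fixed) in that parameterization. *)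

theory Defs
  imports "HOL-Analysis.Analysis"
begin

text \<open>Trinomial probability of counts (a,b,c) (a = #subjects with 0 sites cured,
  b = #with 1 cured, c = #with 2 cured) for n trials and cell probabilities (p0,p1,p2).\<close>
definition trinom_pmf :: "nat \<Rightarrow> real \<times> real \<times> real \<Rightarrow> nat \<times> nat \<times> nat \<Rightarrow> real" where
  "trinom_pmf n p k =
     (case p of (p0, p1, p2) \<Rightarrow> case k of (a, b, c) \<Rightarrow>
        fact n / (fact a * fact b * fact c) * p0 ^ a * p1 ^ b * p2 ^ c)"

definition dallal_cells :: "real \<Rightarrow> real \<Rightarrow> real \<times> real \<times> real" where
  "dallal_cells \<gamma> l = (1 - (1 + \<gamma>) * l, 2 * \<gamma> * l, (1 - \<gamma>) * l)"

text \<open>Sample space: ((m00,m10,m20),(m01,m11,m21)) with row sums m+0 = n0, m+1 = n1.\<close>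
definition dallal_outcomes :: "nat \<Rightarrow> nat \<Rightarrow> ((nat \<times> nat \<times> nat) \<times> (nat \<times> nat \<times> nat)) set" where
  "dallal_outcomes n0 n1 =
     {((a0, b0, c0), (a1, b1, c1)). a0 + b0 + c0 = n0 \<and> a1 + b1 + c1 = n1}"

text \<open>Product-trinomial likelihood, original parameterization (gamma, lambda0, lambda1);
  n0 = m+0 (control), n1 = m+1 (treatment).\<close>
definition dallal_pmf :: "nat \<Rightarrow> nat \<Rightarrow> real \<Rightarrow> real \<Rightarrow> real \<Rightarrow>
    (nat \<times> nat \<times> nat) \<times> (nat \<times> nat \<times> nat) \<Rightarrow> real" where
  "dallal_pmf n0 n1 \<gamma> l0 l1 x =
     trinom_pmf n0 (dallal_cells \<gamma> l0) (fst x) * trinom_pmf n1 (dallal_cells \<gamma> l1) (snd x)"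

definition dallal_Omega :: "(real \<times> real \<times> real) set" where
  "dallal_Omega = {(\<gamma>, l0, l1). 0 < \<gamma> \<and> \<gamma> < 1 \<and> 0 < l0 \<and> l0 < 1 / (1 + \<gamma>)
                     \<and> 0 < l1 \<and> l1 < 1 / (1 + \<gamma>)}"

definition dallal_reparam :: "real \<times> real \<times> real \<Rightarrow> real \<times> real \<times> real" where
  "dallal_reparam = (\<lambda>(\<gamma>, l0, l1). (\<gamma>, (1 + \<gamma>) * l0, (1 + \<gamma>) * l1))"

definition dallal_pmf_guv :: "nat \<Rightarrow> nat \<Rightarrow> real^3 \<Rightarrow>
    (nat \<times> nat \<times> nat) \<times> (nat \<times> nat \<times> nat) \<Rightarrow> real" where
  "dallal_pmf_guv n0 n1 \<theta> x =
     dallal_pmf n0 n1 (\<theta>$1) (\<theta>$2 / (1 + \<theta>$1)) (\<theta>$3 / (1 + \<theta>$1)) x"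

definition score :: "(real^'n \<Rightarrow> 'x \<Rightarrow> real) \<Rightarrow> real^'n \<Rightarrow> 'n \<Rightarrow> 'x \<Rightarrow> real" where
  "score P \<theta> j x = deriv (\<lambda>t. ln (P (\<theta> + t *\<^sub>R axis j 1) x)) 0"

definition fisher_info :: "'x set \<Rightarrow> (real^'n \<Rightarrow> 'x \<Rightarrow> real) \<Rightarrow> real^'n \<Rightarrow> real^'n^'n" where
  "fisher_info X P \<theta> = (\<chi> j k. \<Sum>x\<in>X. P \<theta> x * score P \<theta> j x * score P \<theta> k x)"

definition jeffreys_unnorm :: "'x set \<Rightarrow> (real^'n \<Rightarrow> 'x \<Rightarrow> real) \<Rightarrow> real^'n \<Rightarrow> real" where
  "jeffreys_unnorm X P \<theta> = sqrt (det (fisher_info X P \<theta>))"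

definition dallal_jeffreys :: "nat \<Rightarrow> nat \<Rightarrow> real \<times> real \<times> real \<Rightarrow> real" where
  "dallal_jeffreys n0 n1 = (\<lambda>(g, u, v).
     jeffreys_unnorm (dallal_outcomes n0 n1) (dallal_pmf_guv n0 n1) (vector [g, u, v]))"

end

theory Submission
  imports Defs
begin


lemma alg: fixes a b c s x :: real
  assumes "a > 0" "b > 0" "c > 0" "s > 0" "c * c = 1 + x"
  shows "s * (inverse (- (s * a / c)) * (inverse (b / c) / 2 * (-2/(1+x)^2))) = 1/a * (1/b) / (1+x)"
proof -
  have x: "x = c*c - 1" using assms(5) by simp
  show ?thesis using assms unfolding x by (simp add: field_simps power2_eq_square)
qed

lemma h_deriv:
  assumes "0 < x" "x < 1"
  shows "((\<lambda>x. sqrt 2 * arccos (sqrt ((1-x)/(1+x)))) has_real_derivative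
     (x powr (-1/2) * (1-x) powr (-1/2) / (1+x))) (at x)"
proof -
  define q where "q = (1-x)/(1+x)"
  have q: "0 < q" "q < 1" using assms by (auto simp: field_simps q_def)
  have s0: "0 < sqrt q" using q by simp
  have s1: "sqrt q < 1" using q by simp
  have s2: "-1 < sqrt q" using s0 by linarith
  have d1: "((\<lambda>x. (1-x)/(1+x)) has_real_derivative (-2/(1+x)^2)) (at x)"
    using assms by (auto intro!: derivative_eq_intros simp: field_simps power2_eq_square)
  have d2: "(sqrt has_real_derivative (inverse (sqrt q) / 2)) (at q)"
    using q by (intro DERIV_real_sqrt) auto
  have d3: "(arccos has_real_derivative inverse (- sqrt (1 - (sqrt q)\<^sup>2))) (at (sqrt q))"
    using s1 s2 by (intro DERIV_arccos) auto
  have d: "((\<lambda>x. sqrt 2 * arccos (sqrt ((1-x)/(1+x)))) has_real_derivative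
      (sqrt 2 * (inverse (- sqrt (1 - (sqrt q)\<^sup>2)) * (inverse (sqrt q) / 2 * (-2/(1+x)^2))))) (at x)"
    unfolding q_def apply (rule DERIV_cmult)
    apply (rule DERIV_chain2[where g="\<lambda>x. sqrt ((1-x)/(1+x))" and x=x, OF d3[unfolded q_def]])
    apply (rule DERIV_chain2[where g="\<lambda>x. (1-x)/(1+x)" and x=x, OF d2[unfolded q_def]])
    apply (rule d1)
    done
  have e1: "1 - (sqrt q)\<^sup>2 = 2*x/(1+x)" using q assms by (simp add: q_def field_simps)
  have e2: "sqrt (2*x/(1+x)) = sqrt 2 * sqrt x / sqrt (1+x)" by (simp add: real_sqrt_mult real_sqrt_divide)
  have e12: "sqrt (1 - (sqrt q)\<^sup>2) = sqrt 2 * sqrt x / sqrt (1+x)" using e1 e2 by simp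
  have e3: "sqrt q = sqrt (1-x) / sqrt (1+x)" by (simp add: q_def real_sqrt_divide)
  have e4: "sqrt (1+x) * sqrt (1+x) = 1+x" using assms by simp
  have pw: "x powr (-1/2) = 1 / sqrt x" "(1-x) powr (-1/2) = 1 / sqrt (1-x)"
    using assms by (simp_all add: powr_minus_divide powr_half_sqrt)
  have "sqrt 2 * (inverse (- sqrt (1 - (sqrt q)\<^sup>2)) * (inverse (sqrt q) / 2 * (-2/(1+x)^2)))
      = x powr (-1/2) * (1-x) powr (-1/2) / (1+x)"
  proof -
    have p: "sqrt x > 0" "sqrt (1-x) > 0" "sqrt (1+x) > 0" using assms by auto
    show ?thesis unfolding e12 unfolding e3 pw
      by (rule alg[OF p(1) p(2) p(3) _ e4]) simp
  qed
  with d show ?thesis by simp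
qed

lemma h_integral:
  "((\<lambda>x::real. x powr (-1/2) * (1-x) powr (-1/2) / (1+x)) has_integral (pi / sqrt 2)) {0<..<1}"
proof -
  have c: "continuous_on {0..1::real} (\<lambda>x. sqrt 2 * arccos (sqrt ((1-x)/(1+x))))"
  proof (intro continuous_intros ballI conjI)
    fix x :: real assume x: "x \<in> {0..1}"
    have "0 \<le> (1-x)/(1+x)" "(1-x)/(1+x) \<le> 1" using x by (auto simp: field_simps)
    then show "-1 \<le> sqrt ((1-x)/(1+x))" "sqrt ((1-x)/(1+x)) \<le> 1"
      by (auto intro: order_trans[OF _ real_sqrt_ge_zero])
  qed (auto)
  have "((\<lambda>x::real. x powr (-1/2) * (1-x) powr (-1/2) / (1+x)) has_integral
      (sqrt 2 * arccos (sqrt ((1-1)/(1+1))) - sqrt 2 * arccos (sqrt ((1-0)/(1+0))))) {0..1}"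
    by (rule fundamental_theorem_of_calculus_interior)
       (use c h_deriv in \<open>auto simp: has_real_derivative_iff_has_vector_derivative[symmetric]\<close>)
  moreover have "sqrt 2 * arccos (sqrt ((1-1)/(1+1))) - sqrt 2 * arccos (sqrt ((1-0)/(1+0))) = pi / sqrt 2"
    by (simp add: field_simps)
  ultimately show ?thesis by (simp add: has_integral_Icc_iff_Ioo)
qed

lemma phi_deriv:
  assumes "0 < x" "x < 1"
  shows "((\<lambda>x. arcsin (2*x-1)) has_real_derivative (x powr (-1/2) * (1-x) powr (-1/2))) (at x)"
proof -
  have d: "((\<lambda>x. arcsin (2*x-1)) has_real_derivative (inverse (sqrt (1 - (2*x-1)\<^sup>2)) * 2)) (at x)"
    apply (rule DERIV_chain2[where g="\<lambda>x. 2*x-1" and x=x, OF DERIV_arcsin])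
    using assms by (auto intro!: derivative_eq_intros)
  have "1 - (2*x-1)\<^sup>2 = 4 * (x * (1-x))" by (simp add: power2_eq_square algebra_simps)
  then have "sqrt (1 - (2*x-1)\<^sup>2) = 2 * (sqrt x * sqrt (1-x))"
    by (simp add: real_sqrt_mult)
  moreover have "x powr (-1/2) = 1 / sqrt x" "(1-x) powr (-1/2) = 1 / sqrt (1-x)"
    using assms by (simp_all add: powr_minus_divide powr_half_sqrt)
  ultimately show ?thesis using d by (simp add: inverse_eq_divide)
qed

lemma phi_integral:
  "((\<lambda>x::real. x powr (-1/2) * (1-x) powr (-1/2)) has_integral pi) {0<..<1}"
proof -
  have c: "continuous_on {0..1::real} (\<lambda>x. arcsin (2*x-1))"
    by (intro continuous_intros) auto
  have "((\<lambda>x::real. x powr (-1/2) * (1-x) powr (-1/2)) has_integral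
      (arcsin (2*1-1) - arcsin (2*0-1))) {0..1}"
    by (rule fundamental_theorem_of_calculus_interior)
       (use c phi_deriv in \<open>auto simp: has_real_derivative_iff_has_vector_derivative[symmetric]\<close>)
  then show ?thesis by (simp add: has_integral_Icc_iff_Ioo)
qed
lemma prod_has_integral:
  fixes f :: "'a::euclidean_space \<Rightarrow> real" and g :: "'b::euclidean_space \<Rightarrow> real"
  assumes oS: "open S" and oT: "open T" and cf: "continuous_on S f" and cg: "continuous_on T g"
    and f0: "\<And>x. x\<in>S \<Longrightarrow> 0 \<le> f x" and g0: "\<And>y. y\<in>T \<Longrightarrow> 0 \<le> g y"
    and fI: "(f has_integral I) S" and gK: "(g has_integral K) T"
  shows "((\<lambda>(x,y). f x * g y) has_integral (I*K)) (S \<times> T)"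
proof -
  define F where "F = (\<lambda>x. indicator S x * f x)"
  define G where "G = (\<lambda>y. indicator T y * g y)"
  have Fm[measurable]: "F \<in> borel_measurable borel"
    using borel_measurable_continuous_on_indicator[OF _ cf] oS by (simp add: F_def)
  have Gm[measurable]: "G \<in> borel_measurable borel"
    using borel_measurable_continuous_on_indicator[OF _ cg] oT by (simp add: G_def)
  have F0: "0 \<le> F x" for x using f0 by (simp add: F_def indicator_def)
  have G0: "0 \<le> G x" for x using g0 by (simp add: G_def indicator_def)
  have I0: "0 \<le> I" using has_integral_nonneg[OF fI] f0 by auto
  have K0: "0 \<le> K" using has_integral_nonneg[OF gK] g0 by auto
  have nF: "integral\<^sup>N lborel (\<lambda>x. ennreal (F x)) = ennreal I"
    unfolding F_def by (rule nn_integral_has_integral_lebesgue[OF f0 fI])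
  have nG: "integral\<^sup>N lborel (\<lambda>x. ennreal (G x)) = ennreal K"
    unfolding G_def by (rule nn_integral_has_integral_lebesgue[OF g0 gK])
  define H where "H = (\<lambda>z::'a\<times>'b. F (fst z) * G (snd z))"
  have Hm: "H \<in> borel_measurable borel"
    unfolding H_def borel_prod[symmetric] by measurable
  have "integral\<^sup>N lborel (\<lambda>z. ennreal (H z)) = integral\<^sup>N (lborel \<Otimes>\<^sub>M lborel) (\<lambda>z. ennreal (H z))"
    by (simp add: lborel_prod)
  also have "\<dots> = (\<integral>\<^sup>+ x. \<integral>\<^sup>+ y. ennreal (H (x,y)) \<partial>lborel \<partial>lborel)"
    by (rule lborel.nn_integral_fst[symmetric]) (use Hm in \<open>simp add: lborel_prod\<close>)
  also have "\<dots> = (\<integral>\<^sup>+ x. ennreal (F x) * ennreal K \<partial>lborel)"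
    by (simp add: H_def ennreal_mult F0 G0 nn_integral_cmult nG)
  also have "\<dots> = ennreal (I * K)"
    by (simp add: nn_integral_multc nF ennreal_mult I0 K0)
  finally have "(H has_integral (I*K)) UNIV"
    by (intro nn_integral_has_integral Hm) (auto simp: H_def F0 G0 I0 K0)
  moreover have "H = (\<lambda>z. if z \<in> S \<times> T then (\<lambda>(x,y). f x * g y) z else 0)"
    by (auto simp: H_def F_def G_def indicator_def fun_eq_iff)
  ultimately show ?thesis by (simp add: has_integral_restrict_UNIV)
qed

definition kk :: "real \<Rightarrow> real \<times> real \<Rightarrow> real" where
  "kk r = (\<lambda>(u,v). sqrt (u + r * v) * u powr (-1/2) * (1 - u) powr (-1/2)
             * v powr (-1/2) * (1 - v) powr (-1/2))"

lemma one_Ioo: "((\<lambda>x::real. 1) has_integral (1::real)) {0<..<1}"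
  using has_integral_const_real[of "1::real" 0 1] by (simp add: has_integral_Icc_iff_Ioo)

lemma kk_cont: assumes "0 \<le> r" shows "continuous_on ({0<..<1} \<times> {0<..<1}) (kk r)"
  unfolding kk_def case_prod_unfold
  using assms by (intro continuous_intros) (auto simp: add_pos_nonneg)

lemma ge1: "1 \<le> x \<Longrightarrow> 1 \<le> y \<Longrightarrow> 1 \<le> x * (y::real)"
  using mult_mono[of 1 x 1 y] by simp

lemma kk_ge1: assumes "0 \<le> r" "0 < u" "u < 1" "0 < v" "v < 1" shows "1 \<le> kk r (u,v)"
proof -
  have pw: "u powr (-1/2) = 1 / sqrt u" "(1-u) powr (-1/2) = 1 / sqrt (1-u)"
     "v powr (-1/2) = 1 / sqrt v" "(1-v) powr (-1/2) = 1 / sqrt (1-v)"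
    using assms by (simp_all add: powr_minus_divide powr_half_sqrt)
  have a: "1 \<le> sqrt (u + r * v) * (1 / sqrt u)" using assms
    by (simp add: field_simps mult_nonneg_nonneg)
  have b: "1 \<le> 1 / sqrt (1-u)" "1 \<le> 1 / sqrt v" "1 \<le> 1 / sqrt (1-v)" using assms
    by (simp_all add: field_simps)
  have "1 \<le> (sqrt (u + r * v) * (1 / sqrt u)) * (1 / sqrt (1-u)) * (1 / sqrt v) * (1 / sqrt (1-v))"
    using a b ge1 by metis
  then show ?thesis unfolding kk_def prod.case pw by simp
qed

lemma B_props: "open ({0<..<1::real} \<times> {0<..<1::real})" "({0<..<1::real} \<times> {0<..<1::real}) \<in> sets lebesgue"
proof -
  show o: "open ({0<..<1::real} \<times> {0<..<1::real})" by (intro open_Times) auto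
  have "bounded ({0<..<1::real} \<times> {0<..<1::real})" by (intro bounded_Times) auto
  then show "({0<..<1::real} \<times> {0<..<1::real}) \<in> sets lebesgue"
    using lmeasurable_open[OF _ o] by blast
qed

lemma phi_cont: "continuous_on {0<..<1::real} (\<lambda>x. x powr (-1/2) * (1-x) powr (-1/2))"
  by (intro continuous_intros) auto

lemma kk_int: assumes r: "0 \<le> r"
  shows "kk r integrable_on ({0<..<1} \<times> {0<..<1})" "1 \<le> integral ({0<..<1} \<times> {0<..<1}) (kk r)"
proof -
  let ?B = "{0<..<1::real} \<times> {0<..<1::real}"
  let ?phi = "\<lambda>x::real. x powr (-1/2) * (1-x) powr (-1/2)"
  have b: "((\<lambda>(x,y). (sqrt (1+r) * ?phi x) * ?phi y) has_integral ((sqrt (1+r) * pi) * pi)) ?B"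
    by (rule prod_has_integral[OF _ _ _ _ _ _ has_integral_mult_right[OF phi_integral] phi_integral])
       (use r in \<open>auto intro!: continuous_intros\<close>)
  have m: "kk r \<in> borel_measurable (lebesgue_on ?B)"
    by (rule continuous_imp_measurable_on_sets_lebesgue[OF kk_cont[OF r] B_props(2)])
  have bd: "\<bar>kk r z\<bar> \<le> (\<lambda>(x,y). (sqrt (1+r) * ?phi x) * ?phi y) z" if z: "z \<in> ?B" for z
  proof -
    obtain u v where z': "z = (u,v)" "0 < u" "u < 1" "0 < v" "v < 1" using z by auto
    have "0 \<le> kk r z" using kk_ge1[OF r z'(2-5)] z'(1) by simp
    moreover have "sqrt (u + r * v) \<le> sqrt (1 + r)"
    proof -
      have "r * v \<le> r" using z' r by (simp add: mult_left_le)
      then show ?thesis using z' by simp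
    qed
    ultimately show ?thesis using z' unfolding kk_def
      by (auto simp: mult.assoc intro!: mult_right_mono)
  qed
  show i: "kk r integrable_on ?B"
    by (rule measurable_bounded_by_integrable_imp_integrable_real[OF m _ bd B_props(2)])
       (use b in blast)
  have one: "((\<lambda>z. 1::real) has_integral 1) ?B"
    using prod_has_integral[OF _ _ _ _ _ _ one_Ioo one_Ioo]
    by (simp add: case_prod_unfold continuous_on_const)
  have "integral ?B (\<lambda>z. 1) \<le> integral ?B (kk r)"
    by (rule integral_le) (use i one kk_ge1 r in auto)
  then show "1 \<le> integral ?B (kk r)" using one by (simp add: integral_unique)
qed
definition hh :: "real \<Rightarrow> real" where
  "hh x = x powr (-1/2) * (1-x) powr (-1/2) / (1+x)"

lemma analysis_part:
  fixes J :: "real \<times> real \<times> real \<Rightarrow> real" and r c :: real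
  assumes r: "0 \<le> r" and c: "c > 0"
  and J: "\<forall>\<gamma> u v. 0 < \<gamma> \<and> \<gamma> < 1 \<and> 0 < u \<and> u < 1 \<and> 0 < v \<and> v < 1 \<longrightarrow>
          J (\<gamma>, u, v) = c * ((\<gamma> powr (-1/2) * (1 - \<gamma>) powr (-1/2) / (1 + \<gamma>))
             * sqrt (u + r * v) * u powr (-1/2) * (1 - u) powr (-1/2)
             * v powr (-1/2) * (1 - v) powr (-1/2))"
  defines "C \<equiv> {0<..<(1::real)} \<times> {0<..<(1::real)} \<times> {0<..<(1::real)}"
      and "g \<equiv> (\<lambda>\<gamma>::real. sqrt 2 / pi * (\<gamma> powr (-1/2) * (1 - \<gamma>) powr (-1/2) / (1 + \<gamma>)))"
  shows "J integrable_on C \<and> integral C J > 0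
    \<and> (let Z = integral C J in
         (\<forall>\<gamma>. 0 < \<gamma> \<and> \<gamma> < 1 \<longrightarrow>
            integral ({0<..<1} \<times> {0<..<1}) (\<lambda>(u, v). J (\<gamma>, u, v) / Z) = g \<gamma>)
       \<and> (\<forall>\<gamma> u v. 0 < \<gamma> \<and> \<gamma> < 1 \<and> 0 < u \<and> u < 1 \<and> 0 < v \<and> v < 1 \<longrightarrow>
            J (\<gamma>, u, v) / Z = g \<gamma> * integral {0<..<1} (\<lambda>\<gamma>'. J (\<gamma>', u, v) / Z)))"
proof -
  let ?B = "{0<..<1::real} \<times> {0<..<1::real}"
  define K where "K = integral ?B (kk r)"
  have K: "(kk r has_integral K) ?B" "1 \<le> K" using kk_int[OF r] by (auto simp: K_def)
  have Jeq: "J (x, y) = c * hh x * kk r y" if "x \<in> {0<..<1}" "y \<in> ?B" for x y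
    using that J by (auto simp: hh_def kk_def mult.assoc)
  have hI: "(hh has_integral (pi / sqrt 2)) {0<..<1}"
    unfolding hh_def by (rule h_integral)
  have hc: "continuous_on {0<..<1} hh" unfolding hh_def by (intro continuous_intros) auto
  have h0: "0 \<le> hh x" if "x \<in> {0<..<1}" for x using that by (simp add: hh_def)
  have k0: "0 \<le> kk r y" if "y \<in> ?B" for y using that kk_ge1[OF r] by force
  define Z0 where "Z0 = c * (pi / sqrt 2) * K"
  have Z0: "Z0 > 0" using c K by (simp add: Z0_def)
  have P: "((\<lambda>(x,y). (c * hh x) * kk r y) has_integral Z0) ({0<..<1} \<times> ?B)"
    unfolding Z0_def
    by (rule prod_has_integral[OF _ B_props(1) _ kk_cont[OF r] _ k0 has_integral_mult_right[OF hI] K(1)])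
       (use c h0 hc in \<open>auto intro!: continuous_intros\<close>)
  have CB: "C = {0<..<1} \<times> ?B" by (simp add: C_def)
  have JI: "(J has_integral Z0) C"
    unfolding CB using P by (rule has_integral_eq[rotated]) (auto simp: Jeq)
  then have IZ: "integral C J = Z0" by (rule integral_unique)
  have gh: "g x = sqrt 2 / pi * hh x" for x by (simp add: g_def hh_def)
  have m1: "integral ?B (\<lambda>(u, v). J (\<gamma>, u, v) / Z0) = g \<gamma>" if "0 < \<gamma>" "\<gamma> < 1" for \<gamma>
  proof -
    have "integral ?B (\<lambda>(u, v). J (\<gamma>, u, v) / Z0) = integral ?B (\<lambda>y. (c * hh \<gamma> / Z0) * kk r y)"
      by (rule integral_cong) (use that in \<open>auto simp: Jeq\<close>)
    also have "\<dots> = c * hh \<gamma> / Z0 * K" using K(1) by (simp add: integral_unique)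
    also have "\<dots> = g \<gamma>" using c K by (simp add: Z0_def gh field_simps)
    finally show ?thesis .
  qed
  have m2: "J (\<gamma>, u, v) / Z0 = g \<gamma> * integral {0<..<1} (\<lambda>\<gamma>'. J (\<gamma>', u, v) / Z0)"
    if "0 < \<gamma>" "\<gamma> < 1" "0 < u" "u < 1" "0 < v" "v < 1" for \<gamma> u v
  proof -
    have "integral {0<..<1} (\<lambda>\<gamma>'. J (\<gamma>', u, v) / Z0) = integral {0<..<1} (\<lambda>x. (c * kk r (u,v) / Z0) * hh x)"
      by (rule integral_cong) (use that in \<open>auto simp: Jeq\<close>)
    also have "\<dots> = c * kk r (u,v) / Z0 * (pi / sqrt 2)" using hI by (simp add: integral_unique)
    finally have "g \<gamma> * integral {0<..<1} (\<lambda>\<gamma>'. J (\<gamma>', u, v) / Z0) = c * hh \<gamma> * kk r (u,v) / Z0"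
      using c K by (simp add: Z0_def gh field_simps)
    then show ?thesis using that by (simp add: Jeq del: integral_divide)
  qed
  show ?thesis using JI IZ Z0 m1 m2 by (auto simp: Let_def)
qed



definition T3 :: "nat \<Rightarrow> (nat \<times> nat \<times> nat) set" where
  "T3 n = {(a,b,c). a + b + c = n}"

lemma T3_finite: "finite (T3 n)"
proof -
  have "T3 n \<subseteq> {0..n} \<times> {0..n} \<times> {0..n}" by (auto simp: T3_def)
  then show ?thesis by (rule finite_subset) auto
qed

lemma T3_0: "T3 0 = {(0,0,0)}" by (auto simp: T3_def)

lemma shiftA:
  fixes f :: "nat \<times> nat \<times> nat \<Rightarrow> real"
  shows "(\<Sum>x\<in>T3 n. trinom_pmf n (p0,p1,p2) x * (p0 * f (case x of (a,b,c) \<Rightarrow> (Suc a, b, c))))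
       = (\<Sum>y\<in>T3 (Suc n). real (fst y) / real (Suc n) * trinom_pmf (Suc n) (p0,p1,p2) y * f y)"
proof -
  let ?h = "\<lambda>x::nat\<times>nat\<times>nat. case x of (a,b,c) \<Rightarrow> (Suc a, b, c)"
  have inj: "inj_on ?h (T3 n)" by (auto simp: inj_on_def)
  have img: "?h ` T3 n = {y \<in> T3 (Suc n). fst y \<ge> 1}"
  proof (rule set_eqI, rule iffI)
    fix y assume "y \<in> {y \<in> T3 (Suc n). fst y \<ge> 1}"
    then obtain a b c where y: "y = (a,b,c)" "a + b + c = Suc n" "a \<ge> 1" by (auto simp: T3_def)
    then have "(a - 1, b, c) \<in> T3 n" "?h (a-1,b,c) = y" by (auto simp: T3_def)
    then show "y \<in> ?h ` T3 n" by force
  qed (auto simp: T3_def)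
  have "(\<Sum>y\<in>T3 (Suc n). real (fst y) / real (Suc n) * trinom_pmf (Suc n) (p0,p1,p2) y * f y)
      = (\<Sum>y\<in>{y \<in> T3 (Suc n). fst y \<ge> 1}. real (fst y) / real (Suc n) * trinom_pmf (Suc n) (p0,p1,p2) y * f y)"
    by (rule sum.mono_neutral_right) (auto simp: T3_finite)
  also have "\<dots> = (\<Sum>x\<in>T3 n. real (fst (?h x)) / real (Suc n) * trinom_pmf (Suc n) (p0,p1,p2) (?h x) * f (?h x))"
    unfolding img[symmetric] by (rule sum.reindex[OF inj, unfolded comp_def])
  also have "\<dots> = (\<Sum>x\<in>T3 n. trinom_pmf n (p0,p1,p2) x * (p0 * f (?h x)))"
  proof (rule sum.cong[OF refl])
    fix x assume "x \<in> T3 n"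
    then obtain a b c where x: "x = (a,b,c)" "a + b + c = n" by (auto simp: T3_def)
    show "real (fst (?h x)) / real (Suc n) * trinom_pmf (Suc n) (p0,p1,p2) (?h x) * f (?h x)
        = trinom_pmf n (p0,p1,p2) x * (p0 * f (?h x))"
      using x by (simp add: trinom_pmf_def field_simps del: of_nat_Suc)
  qed
  finally show ?thesis by simp
qed

lemma shiftB:
  fixes f :: "nat \<times> nat \<times> nat \<Rightarrow> real"
  shows "(\<Sum>x\<in>T3 n. trinom_pmf n (p0,p1,p2) x * (p1 * f (case x of (a,b,c) \<Rightarrow> (a, Suc b, c))))
       = (\<Sum>y\<in>T3 (Suc n). real (fst (snd y)) / real (Suc n) * trinom_pmf (Suc n) (p0,p1,p2) y * f y)"
proof -
  let ?h = "\<lambda>x::nat\<times>nat\<times>nat. case x of (a,b,c) \<Rightarrow> (a, Suc b, c)"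
  have inj: "inj_on ?h (T3 n)" by (auto simp: inj_on_def)
  have img: "?h ` T3 n = {y \<in> T3 (Suc n). fst (snd y) \<ge> 1}"
  proof (rule set_eqI, rule iffI)
    fix y assume "y \<in> {y \<in> T3 (Suc n). fst (snd y) \<ge> 1}"
    then obtain a b c where y: "y = (a,b,c)" "a + b + c = Suc n" "b \<ge> 1" by (auto simp: T3_def)
    then have "(a, b - 1, c) \<in> T3 n" "?h (a,b-1,c) = y" by (auto simp: T3_def)
    then show "y \<in> ?h ` T3 n" by force
  qed (auto simp: T3_def)
  have "(\<Sum>y\<in>T3 (Suc n). real (fst (snd y)) / real (Suc n) * trinom_pmf (Suc n) (p0,p1,p2) y * f y)
      = (\<Sum>y\<in>{y \<in> T3 (Suc n). fst (snd y) \<ge> 1}. real (fst (snd y)) / real (Suc n) * trinom_pmf (Suc n) (p0,p1,p2) y * f y)"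
    by (rule sum.mono_neutral_right) (auto simp: T3_finite)
  also have "\<dots> = (\<Sum>x\<in>T3 n. real (fst (snd (?h x))) / real (Suc n) * trinom_pmf (Suc n) (p0,p1,p2) (?h x) * f (?h x))"
    unfolding img[symmetric] by (rule sum.reindex[OF inj, unfolded comp_def])
  also have "\<dots> = (\<Sum>x\<in>T3 n. trinom_pmf n (p0,p1,p2) x * (p1 * f (?h x)))"
  proof (rule sum.cong[OF refl])
    fix x assume "x \<in> T3 n"
    then obtain a b c where x: "x = (a,b,c)" "a + b + c = n" by (auto simp: T3_def)
    show "real (fst (snd (?h x))) / real (Suc n) * trinom_pmf (Suc n) (p0,p1,p2) (?h x) * f (?h x)
        = trinom_pmf n (p0,p1,p2) x * (p1 * f (?h x))"
      using x by (simp add: trinom_pmf_def field_simps del: of_nat_Suc)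
  qed
  finally show ?thesis by simp
qed

lemma shiftC:
  fixes f :: "nat \<times> nat \<times> nat \<Rightarrow> real"
  shows "(\<Sum>x\<in>T3 n. trinom_pmf n (p0,p1,p2) x * (p2 * f (case x of (a,b,c) \<Rightarrow> (a, b, Suc c))))
       = (\<Sum>y\<in>T3 (Suc n). real (snd (snd y)) / real (Suc n) * trinom_pmf (Suc n) (p0,p1,p2) y * f y)"
proof -
  let ?h = "\<lambda>x::nat\<times>nat\<times>nat. case x of (a,b,c) \<Rightarrow> (a, b, Suc c)"
  have inj: "inj_on ?h (T3 n)" by (auto simp: inj_on_def)
  have img: "?h ` T3 n = {y \<in> T3 (Suc n). snd (snd y) \<ge> 1}"
  proof (rule set_eqI, rule iffI)
    fix y assume "y \<in> {y \<in> T3 (Suc n). snd (snd y) \<ge> 1}"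
    then obtain a b c where y: "y = (a,b,c)" "a + b + c = Suc n" "c \<ge> 1" by (auto simp: T3_def)
    then have "(a, b, c - 1) \<in> T3 n" "?h (a,b,c-1) = y" by (auto simp: T3_def)
    then show "y \<in> ?h ` T3 n" by force
  qed (auto simp: T3_def)
  have "(\<Sum>y\<in>T3 (Suc n). real (snd (snd y)) / real (Suc n) * trinom_pmf (Suc n) (p0,p1,p2) y * f y)
      = (\<Sum>y\<in>{y \<in> T3 (Suc n). snd (snd y) \<ge> 1}. real (snd (snd y)) / real (Suc n) * trinom_pmf (Suc n) (p0,p1,p2) y * f y)"
    by (rule sum.mono_neutral_right) (auto simp: T3_finite)
  also have "\<dots> = (\<Sum>x\<in>T3 n. real (snd (snd (?h x))) / real (Suc n) * trinom_pmf (Suc n) (p0,p1,p2) (?h x) * f (?h x))"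
    unfolding img[symmetric] by (rule sum.reindex[OF inj, unfolded comp_def])
  also have "\<dots> = (\<Sum>x\<in>T3 n. trinom_pmf n (p0,p1,p2) x * (p2 * f (?h x)))"
  proof (rule sum.cong[OF refl])
    fix x assume "x \<in> T3 n"
    then obtain a b c where x: "x = (a,b,c)" "a + b + c = n" by (auto simp: T3_def)
    show "real (snd (snd (?h x))) / real (Suc n) * trinom_pmf (Suc n) (p0,p1,p2) (?h x) * f (?h x)
        = trinom_pmf n (p0,p1,p2) x * (p2 * f (?h x))"
      using x by (simp add: trinom_pmf_def field_simps del: of_nat_Suc)
  qed
  finally show ?thesis by simp
qed

lemma trinom_step:
  fixes f :: "nat \<times> nat \<times> nat \<Rightarrow> real"
  shows "(\<Sum>y\<in>T3 (Suc n). trinom_pmf (Suc n) (p0,p1,p2) y * f y)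
     = (\<Sum>x\<in>T3 n. trinom_pmf n (p0,p1,p2) x * (p0 * f (case x of (a,b,c) \<Rightarrow> (Suc a, b, c))
          + p1 * f (case x of (a,b,c) \<Rightarrow> (a, Suc b, c)) + p2 * f (case x of (a,b,c) \<Rightarrow> (a, b, Suc c))))"
proof -
  have "(\<Sum>x\<in>T3 n. trinom_pmf n (p0,p1,p2) x * (p0 * f (case x of (a,b,c) \<Rightarrow> (Suc a, b, c))
          + p1 * f (case x of (a,b,c) \<Rightarrow> (a, Suc b, c)) + p2 * f (case x of (a,b,c) \<Rightarrow> (a, b, Suc c))))
    = (\<Sum>x\<in>T3 n. trinom_pmf n (p0,p1,p2) x * (p0 * f (case x of (a,b,c) \<Rightarrow> (Suc a, b, c))))
      + (\<Sum>x\<in>T3 n. trinom_pmf n (p0,p1,p2) x * (p1 * f (case x of (a,b,c) \<Rightarrow> (a, Suc b, c))))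
      + (\<Sum>x\<in>T3 n. trinom_pmf n (p0,p1,p2) x * (p2 * f (case x of (a,b,c) \<Rightarrow> (a, b, Suc c))))"
    by (simp add: sum.distrib distrib_left)
  also have "\<dots> = (\<Sum>y\<in>T3 (Suc n). (real (fst y) / real (Suc n) * trinom_pmf (Suc n) (p0,p1,p2) y * f y
       + real (fst (snd y)) / real (Suc n) * trinom_pmf (Suc n) (p0,p1,p2) y * f y)
       + real (snd (snd y)) / real (Suc n) * trinom_pmf (Suc n) (p0,p1,p2) y * f y)"
    unfolding shiftA shiftB shiftC sum.distrib ..
  also have "\<dots> = (\<Sum>y\<in>T3 (Suc n). trinom_pmf (Suc n) (p0,p1,p2) y * f y)"
  proof (rule sum.cong[OF refl])
    fix y assume "y \<in> T3 (Suc n)"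
    then obtain a b c where y: "y = (a,b,c)" "a + b + c = Suc n" by (auto simp: T3_def)
    then have "real a + real b + real c = real (Suc n)" by (metis of_nat_add)
    then show "real (fst y) / real (Suc n) * trinom_pmf (Suc n) (p0,p1,p2) y * f y
       + real (fst (snd y)) / real (Suc n) * trinom_pmf (Suc n) (p0,p1,p2) y * f y
       + real (snd (snd y)) / real (Suc n) * trinom_pmf (Suc n) (p0,p1,p2) y * f y
       = trinom_pmf (Suc n) (p0,p1,p2) y * f y"
      using y by (simp add: field_simps del: of_nat_Suc) (simp add: distrib_right[symmetric] del: of_nat_Suc)
  qed
  finally show ?thesis by simp
qed

definition lin :: "real \<times> real \<times> real \<Rightarrow> nat \<times> nat \<times> nat \<Rightarrow> real" where
  "lin l x = (case l of (A,B,C) \<Rightarrow> case x of (a,b,c) \<Rightarrow> A * real a + B * real b + C * real c)"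

definition dotp :: "real \<times> real \<times> real \<Rightarrow> real \<times> real \<times> real \<Rightarrow> real" where
  "dotp l p = (case l of (A,B,C) \<Rightarrow> case p of (p0,p1,p2) \<Rightarrow> A * p0 + B * p1 + C * p2)"

definition qf :: "real \<times> real \<times> real \<Rightarrow> real \<times> real \<times> real \<Rightarrow> real \<times> real \<times> real \<Rightarrow> real" where
  "qf l l' p = (case l of (A,B,C) \<Rightarrow> case l' of (A',B',C') \<Rightarrow> case p of (p0,p1,p2) \<Rightarrow>
      A * A' * p0 + B * B' * p1 + C * C' * p2)"

lemma mom0:
  assumes "p0 + p1 + p2 = 1"
  shows "(\<Sum>x\<in>T3 n. trinom_pmf n (p0,p1,p2) x) = 1"
proof (induction n)
  case 0 then show ?case by (simp add: T3_0 trinom_pmf_def)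
next
  case (Suc n)
  have "(\<Sum>x\<in>T3 (Suc n). trinom_pmf (Suc n) (p0,p1,p2) x) = (\<Sum>x\<in>T3 (Suc n). trinom_pmf (Suc n) (p0,p1,p2) x * (\<lambda>_. 1) x)"
    by simp
  also have "\<dots> = (\<Sum>x\<in>T3 n. trinom_pmf n (p0,p1,p2) x)"
    unfolding trinom_step using assms by simp
  finally show ?case using Suc by simp
qed

lemma lin_shift:
  "lin (A,B,C) (case x of (a,b,c) \<Rightarrow> (Suc a, b, c)) = lin (A,B,C) x + A"
  "lin (A,B,C) (case x of (a,b,c) \<Rightarrow> (a, Suc b, c)) = lin (A,B,C) x + B"
  "lin (A,B,C) (case x of (a,b,c) \<Rightarrow> (a, b, Suc c)) = lin (A,B,C) x + C"
  by (cases x; simp add: lin_def algebra_simps)+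

lemma mom1:
  assumes "p0 + p1 + p2 = 1"
  shows "(\<Sum>x\<in>T3 n. trinom_pmf n (p0,p1,p2) x * lin (A,B,C) x) = real n * dotp (A,B,C) (p0,p1,p2)"
proof (induction n)
  case 0 then show ?case by (simp add: T3_0 trinom_pmf_def lin_def)
next
  case (Suc n)
  have "(\<Sum>x\<in>T3 (Suc n). trinom_pmf (Suc n) (p0,p1,p2) x * lin (A,B,C) x)
     = (\<Sum>x\<in>T3 n. trinom_pmf n (p0,p1,p2) x * lin (A,B,C) x + dotp (A,B,C) (p0,p1,p2) * trinom_pmf n (p0,p1,p2) x)"
    unfolding trinom_step lin_shift
  proof (rule sum.cong[OF refl])
    fix x
    have "p0 * (lin (A, B, C) x + A) + p1 * (lin (A, B, C) x + B) + p2 * (lin (A, B, C) x + C)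
       = (p0 + p1 + p2) * lin (A,B,C) x + dotp (A,B,C) (p0,p1,p2)" by (simp add: dotp_def algebra_simps)
    note E = this
    show "trinom_pmf n (p0, p1, p2) x * (p0 * (lin (A, B, C) x + A) + p1 * (lin (A, B, C) x + B) + p2 * (lin (A, B, C) x + C))
      = trinom_pmf n (p0,p1,p2) x * lin (A,B,C) x + dotp (A,B,C) (p0,p1,p2) * trinom_pmf n (p0,p1,p2) x"
      by (simp only: E assms mult_1_left) (simp add: algebra_simps)
  qed
  also have "\<dots> = real (Suc n) * dotp (A,B,C) (p0,p1,p2)"
    by (simp only: sum.distrib sum_distrib_left[symmetric] Suc.IH mom0[OF assms]) (simp add: algebra_simps)
  finally show ?case .
qed

lemma mom2:
  assumes "p0 + p1 + p2 = 1"
  shows "(\<Sum>x\<in>T3 n. trinom_pmf n (p0,p1,p2) x * (lin (A,B,C) x * lin (A',B',C') x))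
     = real n * (real n - 1) * dotp (A,B,C) (p0,p1,p2) * dotp (A',B',C') (p0,p1,p2)
       + real n * qf (A,B,C) (A',B',C') (p0,p1,p2)"
proof (induction n)
  case 0 then show ?case by (simp add: T3_0 trinom_pmf_def lin_def)
next
  case (Suc n)
  let ?m = "dotp (A,B,C) (p0,p1,p2)" and ?m' = "dotp (A',B',C') (p0,p1,p2)"
    and ?q = "qf (A,B,C) (A',B',C') (p0,p1,p2)"
  have "(\<Sum>x\<in>T3 (Suc n). trinom_pmf (Suc n) (p0,p1,p2) x * (lin (A,B,C) x * lin (A',B',C') x))
     = (\<Sum>x\<in>T3 n. trinom_pmf n (p0,p1,p2) x * (lin (A,B,C) x * lin (A',B',C') x)
          + ?m' * (trinom_pmf n (p0,p1,p2) x * lin (A,B,C) x)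
          + ?m * (trinom_pmf n (p0,p1,p2) x * lin (A',B',C') x)
          + ?q * trinom_pmf n (p0,p1,p2) x)"
    unfolding trinom_step lin_shift
  proof (rule sum.cong[OF refl])
    fix x
    let ?L = "lin (A,B,C) x" and ?L' = "lin (A',B',C') x"
    have "p0 * ((?L + A) * (?L' + A')) + p1 * ((?L + B) * (?L' + B')) + p2 * ((?L + C) * (?L' + C'))
       = (p0 + p1 + p2) * (?L * ?L') + ?m' * ?L + ?m * ?L' + ?q" by (simp add: dotp_def qf_def algebra_simps)
    note E = this
    show "trinom_pmf n (p0, p1, p2) x * (p0 * ((?L + A) * (?L' + A')) + p1 * ((?L + B) * (?L' + B')) + p2 * ((?L + C) * (?L' + C')))
      = trinom_pmf n (p0,p1,p2) x * (?L * ?L') + ?m' * (trinom_pmf n (p0,p1,p2) x * ?L)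
          + ?m * (trinom_pmf n (p0,p1,p2) x * ?L') + ?q * trinom_pmf n (p0,p1,p2) x"
      by (simp only: E assms mult_1_left) (simp add: algebra_simps)
  qed
  also have "\<dots> = real (Suc n) * (real (Suc n) - 1) * ?m * ?m' + real (Suc n) * ?q"
    by (simp only: sum.distrib sum_distrib_left[symmetric] Suc.IH mom0[OF assms] mom1[OF assms]) (simp add: algebra_simps)
  finally show ?case .
qed

lemma two_group:
  assumes p: "p0 + p1 + p2 = 1" and q: "q0 + q1 + q2 = 1"
    and m: "dotp (A0,B0,C0) (p0,p1,p2) = 0" "dotp (A0',B0',C0') (p0,p1,p2) = 0"
           "dotp (A1,B1,C1) (q0,q1,q2) = 0" "dotp (A1',B1',C1') (q0,q1,q2) = 0"
  shows "(\<Sum>x\<in>T3 n0 \<times> T3 n1. trinom_pmf n0 (p0,p1,p2) (fst x) * trinom_pmf n1 (q0,q1,q2) (snd x)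
        * ((lin (A0,B0,C0) (fst x) + lin (A1,B1,C1) (snd x)) * (lin (A0',B0',C0') (fst x) + lin (A1',B1',C1') (snd x))))
     = real n0 * qf (A0,B0,C0) (A0',B0',C0') (p0,p1,p2) + real n1 * qf (A1,B1,C1) (A1',B1',C1') (q0,q1,q2)"
proof -
  let ?P = "trinom_pmf n0 (p0,p1,p2)" and ?Q = "trinom_pmf n1 (q0,q1,q2)"
  let ?L = "lin (A0,B0,C0)" and ?L' = "lin (A0',B0',C0')" and ?M = "lin (A1,B1,C1)" and ?M' = "lin (A1',B1',C1')"
  let ?q1 = "qf (A1,B1,C1) (A1',B1',C1') (q0,q1,q2)"
  have inner: "(\<Sum>y\<in>T3 n1. ?P x * ?Q y * ((?L x + ?M y) * (?L' x + ?M' y)))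
      = ?P x * (?L x * ?L' x) + real n1 * ?q1 * ?P x" for x
  proof -
    have "(\<Sum>y\<in>T3 n1. ?P x * ?Q y * ((?L x + ?M y) * (?L' x + ?M' y)))
       = (\<Sum>y\<in>T3 n1. (?P x * (?L x * ?L' x)) * ?Q y + (?P x * ?L x) * (?Q y * ?M' y)
            + (?P x * ?L' x) * (?Q y * ?M y) + ?P x * (?Q y * (?M y * ?M' y)))"
      by (rule sum.cong[OF refl]) (simp add: algebra_simps)
    also have "\<dots> = ?P x * (?L x * ?L' x) + real n1 * ?q1 * ?P x"
      by (simp only: sum.distrib sum_distrib_left[symmetric] mom0[OF q] mom1[OF q] mom2[OF q] m)
         (simp add: algebra_simps)
    finally show ?thesis .
  qed
  have "(\<Sum>x\<in>T3 n0 \<times> T3 n1. ?P (fst x) * ?Q (snd x) * ((?L (fst x) + ?M (snd x)) * (?L' (fst x) + ?M' (snd x))))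
     = (\<Sum>x\<in>T3 n0. \<Sum>y\<in>T3 n1. ?P x * ?Q y * ((?L x + ?M y) * (?L' x + ?M' y)))"
    by (simp add: sum.cartesian_product case_prod_unfold)
  also have "\<dots> = (\<Sum>x\<in>T3 n0. ?P x * (?L x * ?L' x) + real n1 * ?q1 * ?P x)"
    by (simp only: inner)
  also have "\<dots> = real n0 * qf (A0,B0,C0) (A0',B0',C0') (p0,p1,p2) + real n1 * ?q1"
    by (simp only: sum.distrib sum_distrib_left[symmetric] mom0[OF p] mom2[OF p] m)
  finally show ?thesis .
qed




lemma of_nat_pow_pred: "x \<noteq> 0 \<Longrightarrow> of_nat a * (x::real) ^ (a - 1) = of_nat a * x ^ a / x"
  by (cases a) auto

lemma trinom_deriv:
  fixes q0 q1 q2 :: "real \<Rightarrow> real"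
  assumes d: "(q0 has_real_derivative d0) (at 0)" "(q1 has_real_derivative d1) (at 0)"
      "(q2 has_real_derivative d2) (at 0)"
    and pos: "q0 0 > 0" "q1 0 > 0" "q2 0 > 0"
  shows "((\<lambda>t. trinom_pmf n (q0 t, q1 t, q2 t) (a,b,c)) has_real_derivative
     (trinom_pmf n (q0 0, q1 0, q2 0) (a,b,c) * (real a * d0 / q0 0 + real b * d1 / q1 0 + real c * d2 / q2 0))) (at 0)"
proof -
  define K :: real where "K = fact n / (fact a * fact b * fact c)"
  have "((\<lambda>t. K * q0 t ^ a * q1 t ^ b * q2 t ^ c) has_real_derivative
     (K * (real a * q0 0 ^ (a - 1) * d0) * q1 0 ^ b * q2 0 ^ c
      + K * q0 0 ^ a * (real b * q1 0 ^ (b - 1) * d1) * q2 0 ^ c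
      + K * q0 0 ^ a * q1 0 ^ b * (real c * q2 0 ^ (c - 1) * d2))) (at 0)"
    by (auto intro!: derivative_eq_intros d simp: algebra_simps)
  moreover have "K * (real a * q0 0 ^ (a - 1) * d0) * q1 0 ^ b * q2 0 ^ c
      + K * q0 0 ^ a * (real b * q1 0 ^ (b - 1) * d1) * q2 0 ^ c
      + K * q0 0 ^ a * q1 0 ^ b * (real c * q2 0 ^ (c - 1) * d2)
    = trinom_pmf n (q0 0, q1 0, q2 0) (a,b,c) * (real a * d0 / q0 0 + real b * d1 / q1 0 + real c * d2 / q2 0)"
  proof -
    have e: "real a * q0 0 ^ (a - 1) = real a * q0 0 ^ a / q0 0"
            "real b * q1 0 ^ (b - 1) = real b * q1 0 ^ b / q1 0"
            "real c * q2 0 ^ (c - 1) = real c * q2 0 ^ c / q2 0"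
      using pos of_nat_pow_pred[of "q0 0" a] of_nat_pow_pred[of "q1 0" b] of_nat_pow_pred[of "q2 0" c] by auto
    show ?thesis unfolding trinom_pmf_def prod.case K_def[symmetric]
      by (simp only: e mult.assoc[symmetric]) (simp add: field_simps)
  qed
  ultimately show ?thesis by (simp add: trinom_pmf_def K_def)
qed

definition ell :: "real \<Rightarrow> real \<Rightarrow> real \<Rightarrow> real \<Rightarrow> real \<times> real \<times> real" where
  "ell g u e f = (-f/(1-u), e/g + f/u - e/(1+g), -e/(1-g) + f/u - e/(1+g))"

lemma group_deriv:
  fixes g u e f :: real
  assumes g: "0 < g" "g < 1" and u: "0 < u" "u < 1"
  shows "((\<lambda>t. trinom_pmf n (dallal_cells (g+t*e) ((u+t*f)/(1+(g+t*e)))) x) has_real_derivative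
     (trinom_pmf n (dallal_cells g (u/(1+g))) x * lin (ell g u e f) x)) (at 0)"
proof -
  obtain a b c where x: "x = (a,b,c)" by (cases x)
  let ?q0 = "\<lambda>t. 1 - (1 + (g+t*e)) * ((u+t*f)/(1+(g+t*e)))"
  let ?q1 = "\<lambda>t. 2 * (g+t*e) * ((u+t*f)/(1+(g+t*e)))"
  let ?q2 = "\<lambda>t. (1 - (g+t*e)) * ((u+t*f)/(1+(g+t*e)))"
  define s where "s = 1 + g"
  have s0: "s \<noteq> 0" "1 + g \<noteq> 0" using g by (auto simp: s_def)
  have g0: "g \<noteq> 0" "u \<noteq> 0" "1 - g \<noteq> 0" using g u by auto
  have d0: "(?q0 has_real_derivative (-f)) (at 0)"
    apply (rule derivative_eq_intros refl)+
    apply (simp add: s0)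
    apply (rule refl)+
    apply (simp only: mult_zero_left mult_zero_right add_0_left add_0_right mult_1_left s_def[symmetric])
    using s0 g0 by (simp add: field_simps)
  have d1: "(?q1 has_real_derivative (2*g*(u/(1+g)) * (e/g + f/u - e/(1+g)))) (at 0)"
    apply (rule derivative_eq_intros refl)+
    apply (simp add: s0)
    apply (rule refl)+
    apply (simp only: mult_zero_left mult_zero_right add_0_left add_0_right mult_1_left s_def[symmetric] diff_0)
    using s0 g0 by (simp add: field_simps)
  have d2: "(?q2 has_real_derivative ((1-g)*(u/(1+g)) * (-e/(1-g) + f/u - e/(1+g)))) (at 0)"
    apply (rule derivative_eq_intros refl)+
    apply (simp add: s0)
    apply (rule refl)+
    apply (simp only: mult_zero_left mult_zero_right add_0_left add_0_right mult_1_left s_def[symmetric] diff_0)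
    using s0 g0 by (simp add: field_simps)
  have ug: "u * (1 + g) < 1 + g" using g u by simp
  have p: "?q0 0 > 0" "?q1 0 > 0" "?q2 0 > 0" using g u ug by (auto simp: field_simps)
  have D: "((\<lambda>t. trinom_pmf n (?q0 t, ?q1 t, ?q2 t) (a,b,c)) has_real_derivative
     (trinom_pmf n (?q0 0, ?q1 0, ?q2 0) (a,b,c) * (real a * (-f) / ?q0 0
        + real b * (2*g*(u/(1+g)) * (e/g + f/u - e/(1+g))) / ?q1 0
        + real c * ((1-g)*(u/(1+g)) * (-e/(1-g) + f/u - e/(1+g))) / ?q2 0))) (at 0)"
    by (rule trinom_deriv[OF d0 d1 d2 p])
  have e0: "?q0 0 = 1 - u" using g by simp
  have e1: "?q1 0 = 2*g*(u/(1+g))" by simp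
  have e2: "?q2 0 = (1-g)*(u/(1+g))" by simp
  have "real a * (-f) / ?q0 0
        + real b * (2*g*(u/(1+g)) * (e/g + f/u - e/(1+g))) / ?q1 0
        + real c * ((1-g)*(u/(1+g)) * (-e/(1-g) + f/u - e/(1+g))) / ?q2 0
      = lin (ell g u e f) (a,b,c)"
    unfolding e0 e1 e2 using g u by (simp add: lin_def ell_def)
  with D show ?thesis unfolding x dallal_cells_def by (simp add: e0 e1 e2)
qed

lemma trinom_pos: "0 < p0 \<Longrightarrow> 0 < p1 \<Longrightarrow> 0 < p2 \<Longrightarrow> 0 < trinom_pmf n (p0,p1,p2) x"
  by (cases x) (auto simp: trinom_pmf_def)

lemma cells_pos:
  assumes "0 < g" "g < 1" "0 < u" "u < 1"
  shows "0 < trinom_pmf n (dallal_cells g (u/(1+g))) x"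
proof -
  have ug: "u * (1 + g) < 1 + g" using assms by simp
  show ?thesis unfolding dallal_cells_def using assms ug
    by (intro trinom_pos) (auto simp: field_simps)
qed

lemma alg2: "(A::real) > 0 \<Longrightarrow> B > 0 \<Longrightarrow> inverse (A*B) * (A*(B*y) + A*x*B) = x + y"
  by (simp add: field_simps)

lemma score_core:
  fixes g u v e f f' :: real
  assumes g: "0 < g" "g < 1" and u: "0 < u" "u < 1" and v: "0 < v" "v < 1"
  shows "deriv (\<lambda>t. ln (trinom_pmf n0 (dallal_cells (g+t*e) ((u+t*f)/(1+(g+t*e)))) x0
                 * trinom_pmf n1 (dallal_cells (g+t*e) ((v+t*f')/(1+(g+t*e)))) x1)) 0
       = lin (ell g u e f) x0 + lin (ell g v e f') x1"
proof -
  let ?P0 = "\<lambda>t. trinom_pmf n0 (dallal_cells (g+t*e) ((u+t*f)/(1+(g+t*e)))) x0"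
  let ?P1 = "\<lambda>t. trinom_pmf n1 (dallal_cells (g+t*e) ((v+t*f')/(1+(g+t*e)))) x1"
  have a0: "?P0 0 = trinom_pmf n0 (dallal_cells g (u/(1+g))) x0" by simp
  have a1: "?P1 0 = trinom_pmf n1 (dallal_cells g (v/(1+g))) x1" by simp
  have pos0: "0 < ?P0 0" unfolding a0 by (rule cells_pos[OF g u])
  have pos1: "0 < ?P1 0" unfolding a1 by (rule cells_pos[OF g v])
  have D: "((\<lambda>t. ?P0 t * ?P1 t) has_real_derivative
      (?P0 0 * (trinom_pmf n1 (dallal_cells g (v/(1+g))) x1 * lin (ell g v e f') x1)
       + trinom_pmf n0 (dallal_cells g (u/(1+g))) x0 * lin (ell g u e f) x0 * ?P1 0)) (at 0)"
    by (rule DERIV_mult'[OF group_deriv[OF g u] group_deriv[OF g v]])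
  have L: "((\<lambda>t. ln (?P0 t * ?P1 t)) has_real_derivative
      (inverse (?P0 0 * ?P1 0) * (?P0 0 * (trinom_pmf n1 (dallal_cells g (v/(1+g))) x1 * lin (ell g v e f') x1)
       + trinom_pmf n0 (dallal_cells g (u/(1+g))) x0 * lin (ell g u e f) x0 * ?P1 0))) (at 0)"
    by (rule DERIV_chain2[where g="\<lambda>t. ?P0 t * ?P1 t" and x=0, OF DERIV_ln D])
       (use pos0 pos1 in simp)
  have "inverse (?P0 0 * ?P1 0) * (?P0 0 * (trinom_pmf n1 (dallal_cells g (v/(1+g))) x1 * lin (ell g v e f') x1)
       + trinom_pmf n0 (dallal_cells g (u/(1+g))) x0 * lin (ell g u e f) x0 * ?P1 0)
     = lin (ell g u e f) x0 + lin (ell g v e f') x1"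
    unfolding a0 a1 using pos0 pos1 unfolding a0 a1 by (rule alg2)
  from DERIV_imp_deriv[OF L] this show ?thesis by (rule trans)
qed




definition ee :: "3 \<Rightarrow> 3 \<Rightarrow> real" where "ee i j = (if i = j then 1 else 0)"

lemma ee_vals: "ee 1 1 = 1" "ee 2 2 = 1" "ee 3 3 = 1"
  "ee 1 2 = 0" "ee 1 3 = 0" "ee 2 1 = 0" "ee 2 3 = 0" "ee 3 1 = 0" "ee 3 2 = 0"
  by (simp_all add: ee_def)

lemma comp_eq:
  fixes g u v t :: real and j :: 3
  shows "(vector [g,u,v] + t *\<^sub>R axis j 1 :: real^3) $ 1 = g + t * ee 1 j"
        "(vector [g,u,v] + t *\<^sub>R axis j 1 :: real^3) $ 2 = u + t * ee 2 j"
        "(vector [g,u,v] + t *\<^sub>R axis j 1 :: real^3) $ 3 = v + t * ee 3 j"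
  by (simp_all add: axis_def ee_def)

lemma axis_ee: "axis j (1::real) $ i = ee i j" by (simp add: axis_def ee_def)

lemma score_eq:
  fixes g u v :: real and j :: 3
  assumes g: "0 < g" "g < 1" and u: "0 < u" "u < 1" and v: "0 < v" "v < 1"
  shows "score (dallal_pmf_guv n0 n1) (vector [g,u,v]) j x
       = lin (ell g u (ee 1 j) (ee 2 j)) (fst x) + lin (ell g v (ee 1 j) (ee 3 j)) (snd x)"
proof -
  have "(\<lambda>t. ln (dallal_pmf_guv n0 n1 (vector [g,u,v] + t *\<^sub>R axis j 1) x))
     = (\<lambda>t. ln (trinom_pmf n0 (dallal_cells (g+t*ee 1 j) ((u+t*ee 2 j)/(1+(g+t*ee 1 j)))) (fst x)
                 * trinom_pmf n1 (dallal_cells (g+t*ee 1 j) ((v+t*ee 3 j)/(1+(g+t*ee 1 j)))) (snd x)))"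
    by (simp add: dallal_pmf_guv_def dallal_pmf_def axis_ee)
  then show ?thesis unfolding score_def using score_core[OF g u v] by simp
qed

lemma cells_sum:
  assumes "1 + (g::real) \<noteq> 0"
  shows "(1 - (1 + g) * (u / (1 + g))) + 2 * g * (u / (1 + g)) + (1 - g) * (u / (1 + g)) = 1"
proof -
  define w where "w = u / (1 + g)"
  have "(1 + g) * w = u" using assms by (simp add: w_def)
  moreover have "2 * g * w + (1 - g) * w = (1 + g) * w" by (simp add: algebra_simps)
  ultimately show ?thesis unfolding w_def[symmetric] by simp
qed

lemma mean_g:
  assumes "0 < g" "g < 1" "0 < u" "u < 1"
  shows "dotp (ell g u 1 0) (1 - u, 2 * g * (u / (1 + g)), (1 - g) * (u / (1 + g))) = 0"
proof -
  define s where "s = 1 + g"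
  define m where "m = 1 - g"
  define k where "k = 1 - u"
  have nz: "s \<noteq> 0" "m \<noteq> 0" "g \<noteq> 0" "k \<noteq> 0" "u \<noteq> 0" using assms by (auto simp: s_def m_def k_def)
  show ?thesis
    apply (simp only: dotp_def ell_def prod.case s_def[symmetric] m_def[symmetric] k_def[symmetric])
    using nz apply (simp add: field_simps power2_eq_square)
    apply (simp add: s_def m_def k_def algebra_simps)
    done
qed

lemma mean_u:
  assumes "0 < g" "g < 1" "0 < u" "u < 1"
  shows "dotp (ell g u 0 1) (1 - u, 2 * g * (u / (1 + g)), (1 - g) * (u / (1 + g))) = 0"
proof -
  define s where "s = 1 + g"
  define m where "m = 1 - g"
  define k where "k = 1 - u"
  have nz: "s \<noteq> 0" "m \<noteq> 0" "g \<noteq> 0" "k \<noteq> 0" "u \<noteq> 0" using assms by (auto simp: s_def m_def k_def)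
  show ?thesis
    apply (simp only: dotp_def ell_def prod.case s_def[symmetric] m_def[symmetric] k_def[symmetric])
    using nz apply (simp add: field_simps power2_eq_square)
    apply (simp add: s_def m_def k_def algebra_simps)
    done
qed

lemma qf_gg:
  assumes "0 < g" "g < 1" "0 < u" "u < 1"
  shows "qf (ell g u 1 0) (ell g u 1 0) (1 - u, 2 * g * (u / (1 + g)), (1 - g) * (u / (1 + g)))
     = 2 * u / (g * (1 - g) * (1 + g)^2)"
proof -
  define s where "s = 1 + g"
  define m where "m = 1 - g"
  define k where "k = 1 - u"
  have nz: "s \<noteq> 0" "m \<noteq> 0" "g \<noteq> 0" "k \<noteq> 0" "u \<noteq> 0" using assms by (auto simp: s_def m_def k_def)
  show ?thesis
    apply (simp only: qf_def ell_def prod.case s_def[symmetric] m_def[symmetric] k_def[symmetric])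
    using nz apply (simp add: field_simps power2_eq_square)
    apply (simp add: s_def m_def k_def algebra_simps)
    done
qed

lemma qf_gu:
  assumes "0 < g" "g < 1" "0 < u" "u < 1"
  shows "qf (ell g u 1 0) (ell g u 0 1) (1 - u, 2 * g * (u / (1 + g)), (1 - g) * (u / (1 + g))) = 0"
proof -
  define s where "s = 1 + g"
  define m where "m = 1 - g"
  define k where "k = 1 - u"
  have nz: "s \<noteq> 0" "m \<noteq> 0" "g \<noteq> 0" "k \<noteq> 0" "u \<noteq> 0" using assms by (auto simp: s_def m_def k_def)
  show ?thesis
    apply (simp only: qf_def ell_def prod.case s_def[symmetric] m_def[symmetric] k_def[symmetric])
    using nz apply (simp add: field_simps power2_eq_square)
    apply (simp add: s_def m_def k_def algebra_simps)
    done
qed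

lemma qf_uu:
  assumes "0 < g" "g < 1" "0 < u" "u < 1"
  shows "qf (ell g u 0 1) (ell g u 0 1) (1 - u, 2 * g * (u / (1 + g)), (1 - g) * (u / (1 + g))) = 1 / (u * (1 - u))"
proof -
  define s where "s = 1 + g"
  define m where "m = 1 - g"
  define k where "k = 1 - u"
  have nz: "s \<noteq> 0" "m \<noteq> 0" "g \<noteq> 0" "k \<noteq> 0" "u \<noteq> 0" using assms by (auto simp: s_def m_def k_def)
  show ?thesis
    apply (simp only: qf_def ell_def prod.case s_def[symmetric] m_def[symmetric] k_def[symmetric])
    using nz apply (simp add: field_simps power2_eq_square)
    apply (simp add: s_def m_def k_def algebra_simps)
    done
qed

lemma qf_comm: "qf l l' p = qf l' l p"
  by (cases l; cases l'; cases p) (simp add: qf_def mult.commute mult.left_commute)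

lemma ell00: "ell g u 0 0 = (0,0,0)" by (simp add: ell_def)

lemma two_group':
  assumes p: "p0 + p1 + p2 = 1" and q: "q0 + q1 + q2 = 1"
    and m: "dotp l0 (p0,p1,p2) = 0" "dotp l0' (p0,p1,p2) = 0"
           "dotp l1 (q0,q1,q2) = 0" "dotp l1' (q0,q1,q2) = 0"
  shows "(\<Sum>x\<in>T3 n0 \<times> T3 n1. trinom_pmf n0 (p0,p1,p2) (fst x) * trinom_pmf n1 (q0,q1,q2) (snd x)
        * (lin l0 (fst x) + lin l1 (snd x)) * (lin l0' (fst x) + lin l1' (snd x)))
     = real n0 * qf l0 l0' (p0,p1,p2) + real n1 * qf l1 l1' (q0,q1,q2)"
proof -
  obtain A0 B0 C0 where l0: "l0 = (A0,B0,C0)" by (cases l0)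
  obtain A0' B0' C0' where l0': "l0' = (A0',B0',C0')" by (cases l0')
  obtain A1 B1 C1 where l1: "l1 = (A1,B1,C1)" by (cases l1)
  obtain A1' B1' C1' where l1': "l1' = (A1',B1',C1')" by (cases l1')
  show ?thesis using two_group[OF p q m[unfolded l0 l0' l1 l1'], of n0 n1]
    unfolding l0 l0' l1 l1' by (simp add: mult.assoc)
qed

lemma cells_sum': "1 + (g::real) \<noteq> 0 \<Longrightarrow> (1 - u) + 2 * g * (u / (1 + g)) + (1 - g) * (u / (1 + g)) = 1"
  using cells_sum[of g u] by simp

lemma outcomes_eq: "dallal_outcomes n0 n1 = T3 n0 \<times> T3 n1"
  by (auto simp: dallal_outcomes_def T3_def)

lemma cells_eq: "1 + g \<noteq> 0 \<Longrightarrow> dallal_cells g (u/(1+g)) = (1 - u, 2 * g * (u / (1 + g)), (1 - g) * (u / (1 + g)))"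
  by (simp add: dallal_cells_def)

lemma mean_all:
  assumes "0 < g" "g < 1" "0 < u" "u < 1" and that: "i = 2 \<or> i = 3"
  shows "dotp (ell g u (ee 1 j) (ee i j)) (1 - u, 2 * g * (u / (1 + g)), (1 - g) * (u / (1 + g))) = 0"
  using that exhaust_3[of j] mean_g[OF assms(1-4)] mean_u[OF assms(1-4)]
  by (auto simp: ee_vals ell00 dotp_def)

lemma fisher_entry:
  fixes g u v :: real and j k :: 3
  assumes g: "0 < g" "g < 1" and u: "0 < u" "u < 1" and v: "0 < v" "v < 1"
  shows "fisher_info (dallal_outcomes n0 n1) (dallal_pmf_guv n0 n1) (vector [g,u,v]) $ j $ k
   = real n0 * qf (ell g u (ee 1 j) (ee 2 j)) (ell g u (ee 1 k) (ee 2 k)) (1 - u, 2 * g * (u / (1 + g)), (1 - g) * (u / (1 + g)))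
   + real n1 * qf (ell g v (ee 1 j) (ee 3 j)) (ell g v (ee 1 k) (ee 3 k)) (1 - v, 2 * g * (v / (1 + g)), (1 - g) * (v / (1 + g)))"
proof -
  have g1: "1 + g \<noteq> 0" using g by simp
  have "fisher_info (dallal_outcomes n0 n1) (dallal_pmf_guv n0 n1) (vector [g,u,v]) $ j $ k
    = (\<Sum>x\<in>T3 n0 \<times> T3 n1. trinom_pmf n0 (1 - u, 2 * g * (u / (1 + g)), (1 - g) * (u / (1 + g))) (fst x)
         * trinom_pmf n1 (1 - v, 2 * g * (v / (1 + g)), (1 - g) * (v / (1 + g))) (snd x)
        * (lin (ell g u (ee 1 j) (ee 2 j)) (fst x) + lin (ell g v (ee 1 j) (ee 3 j)) (snd x))
        * (lin (ell g u (ee 1 k) (ee 2 k)) (fst x) + lin (ell g v (ee 1 k) (ee 3 k)) (snd x)))"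
    unfolding fisher_info_def outcomes_eq
    by (simp add: score_eq[OF g u v] dallal_pmf_guv_def dallal_pmf_def cells_eq[OF g1])
  also have "\<dots> = real n0 * qf (ell g u (ee 1 j) (ee 2 j)) (ell g u (ee 1 k) (ee 2 k)) (1 - u, 2 * g * (u / (1 + g)), (1 - g) * (u / (1 + g)))
   + real n1 * qf (ell g v (ee 1 j) (ee 3 j)) (ell g v (ee 1 k) (ee 3 k)) (1 - v, 2 * g * (v / (1 + g)), (1 - g) * (v / (1 + g)))"
    by (rule two_group'[OF cells_sum'[OF g1] cells_sum'[OF g1] mean_all[OF g u] mean_all[OF g u] mean_all[OF g v] mean_all[OF g v]]) auto
  finally show ?thesis .
qed


lemma qf_ug:
  assumes "0 < g" "g < 1" "0 < u" "u < 1"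
  shows "qf (ell g u 0 1) (ell g u 1 0) (1 - u, 2 * g * (u / (1 + g)), (1 - g) * (u / (1 + g))) = 0"
  using qf_gu[OF assms] qf_comm by metis

lemma qf_zero: "qf (0,0,0) l p = 0" "qf l (0,0,0) p = 0"
  by (cases l; cases p; simp add: qf_def)+

lemma det_fisher:
  fixes g u v :: real
  assumes g: "0 < g" "g < 1" and u: "0 < u" "u < 1" and v: "0 < v" "v < 1"
  shows "det (fisher_info (dallal_outcomes n0 n1) (dallal_pmf_guv n0 n1) (vector [g,u,v]))
     = (real n0 * (2 * u / (g * (1 - g) * (1 + g)^2)) + real n1 * (2 * v / (g * (1 - g) * (1 + g)^2)))
       * (real n0 * (1 / (u * (1 - u)))) * (real n1 * (1 / (v * (1 - v))))"
  unfolding det_3 fisher_entry[OF g u v]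
  by (simp add: ee_vals ell00 qf_zero qf_gg[OF g u] qf_gg[OF g v] qf_gu[OF g u] qf_gu[OF g v]
      qf_ug[OF g u] qf_ug[OF g v] qf_uu[OF g u] qf_uu[OF g v] del: times_divide_eq_right divide_divide_eq_left)


lemma powr_mhalf: "0 < (x::real) \<Longrightarrow> x powr (-1/2) = 1 / sqrt x"
  by (simp add: powr_minus_divide powr_half_sqrt)

lemma J_formula:
  fixes g u v :: real
  assumes n0: "n0 \<ge> 1" and g: "0 < g" "g < 1" and u: "0 < u" "u < 1" and v: "0 < v" "v < 1"
  shows "dallal_jeffreys n0 n1 (g,u,v) = sqrt (2 * real n0 ^ 2 * real n1) *
     ((g powr (-1/2) * (1 - g) powr (-1/2) / (1 + g)) * sqrt (u + (real n1 / real n0) * v)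
      * u powr (-1/2) * (1 - u) powr (-1/2) * v powr (-1/2) * (1 - v) powr (-1/2))"
proof -
  let ?r = "real n1 / real n0"
  define s where "s = 1 + g"
  define m where "m = 1 - g"
  define k where "k = 1 - u"
  define l where "l = 1 - v"
  have nz: "s > 0" "m > 0" "k > 0" "l > 0" "real n0 > 0" using assms by (auto simp: s_def m_def k_def l_def)
  have D: "(real n0 * (2 * u / (g * (1 - g) * (1 + g)^2)) + real n1 * (2 * v / (g * (1 - g) * (1 + g)^2)))
       * (real n0 * (1 / (u * (1 - u)))) * (real n1 * (1 / (v * (1 - v))))
     = (2 * real n0 ^ 2 * real n1) * ((u + ?r * v) / (g * m * s^2 * (u * k) * (v * l)))"
    unfolding s_def[symmetric] m_def[symmetric] k_def[symmetric] l_def[symmetric]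
    using nz g u v by (simp add: field_simps power2_eq_square)
  have rv: "0 \<le> u + ?r * v" using u v by simp
  have S: "sqrt ((2 * real n0 ^ 2 * real n1) * ((u + ?r * v) / (g * m * s^2 * (u * k) * (v * l))))
     = sqrt (2 * real n0 ^ 2 * real n1) * (1 / sqrt g * (1 / sqrt m) / s * sqrt (u + ?r * v)
        * (1 / sqrt u) * (1 / sqrt k) * (1 / sqrt v) * (1 / sqrt l))"
    using nz by (simp add: real_sqrt_mult real_sqrt_divide)
  have pw: "g powr (-1/2) = 1 / sqrt g" "(1 - g) powr (-1/2) = 1 / sqrt (1 - g)"
     "u powr (-1/2) = 1 / sqrt u" "(1 - u) powr (-1/2) = 1 / sqrt (1 - u)"
     "v powr (-1/2) = 1 / sqrt v" "(1 - v) powr (-1/2) = 1 / sqrt (1 - v)"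
    using g u v by (simp_all add: powr_minus_divide powr_half_sqrt)
  show ?thesis
    unfolding dallal_jeffreys_def jeffreys_unnorm_def prod.case det_fisher[OF g u v] D S pw
    by (simp add: s_def m_def k_def l_def)
qed



lemma reparam_bij:
  "bij_betw dallal_reparam dallal_Omega ({0<..<(1::real)} \<times> {0<..<(1::real)} \<times> {0<..<(1::real)})"
proof (rule bij_betwI')
  fix x y assume "x \<in> dallal_Omega" "y \<in> dallal_Omega"
  then show "(dallal_reparam x = dallal_reparam y) = (x = y)"
    by (cases x; cases y) (auto simp: dallal_reparam_def dallal_Omega_def)
next
  fix x assume "x \<in> dallal_Omega"
  then obtain g a b where x: "x = (g,a,b)" "0 < g" "g < 1" "0 < a" "a < 1/(1+g)" "0 < b" "b < 1/(1+g)"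
    by (auto simp: dallal_Omega_def)
  then have "(1+g)*a < 1" "(1+g)*b < 1" by (auto simp: field_simps)
  then show "dallal_reparam x \<in> {0<..<1} \<times> {0<..<1} \<times> {0<..<1}"
    using x by (auto simp: dallal_reparam_def)
next
  fix y assume "y \<in> ({0<..<(1::real)} \<times> {0<..<(1::real)} \<times> {0<..<(1::real)})"
  then obtain g u v where y: "y = (g,u,v)" "0 < g" "g < 1" "0 < u" "u < 1" "0 < v" "v < 1" by auto
  have "u/(1+g) < 1/(1+g)" "v/(1+g) < 1/(1+g)" using y by (simp_all add: divide_strict_right_mono)
  then have "(g, u/(1+g), v/(1+g)) \<in> dallal_Omega" using y by (auto simp: dallal_Omega_def)
  moreover have "y = dallal_reparam (g, u/(1+g), v/(1+g))" using y by (auto simp: dallal_reparam_def)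
  ultimately show "\<exists>x\<in>dallal_Omega. y = dallal_reparam x" by blast
qed

theorem proposition1:
  fixes n0 n1 :: nat
  assumes "n0 \<ge> 1" and "n1 \<ge> 1"
  defines "r \<equiv> real n1 / real n0"
      and "J \<equiv> dallal_jeffreys n0 n1"
      and "C \<equiv> {0<..<(1::real)} \<times> {0<..<(1::real)} \<times> {0<..<(1::real)}"
      and "g \<equiv> (\<lambda>\<gamma>::real. sqrt 2 / pi * (\<gamma> powr (-1/2) * (1 - \<gamma>) powr (-1/2) / (1 + \<gamma>)))"
  shows "bij_betw dallal_reparam dallal_Omega C
    \<and> (\<exists>c>0. \<forall>\<gamma> u v. 0 < \<gamma> \<and> \<gamma> < 1 \<and> 0 < u \<and> u < 1 \<and> 0 < v \<and> v < 1 \<longrightarrow>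
          J (\<gamma>, u, v) = c * ((\<gamma> powr (-1/2) * (1 - \<gamma>) powr (-1/2) / (1 + \<gamma>))
             * sqrt (u + r * v) * u powr (-1/2) * (1 - u) powr (-1/2)
             * v powr (-1/2) * (1 - v) powr (-1/2)))
    \<and> J integrable_on C \<and> integral C J > 0
    \<and> (let Z = integral C J in
         (\<forall>\<gamma>. 0 < \<gamma> \<and> \<gamma> < 1 \<longrightarrow>
            integral ({0<..<1} \<times> {0<..<1}) (\<lambda>(u, v). J (\<gamma>, u, v) / Z) = g \<gamma>)
       \<and> (\<forall>\<gamma> u v. 0 < \<gamma> \<and> \<gamma> < 1 \<and> 0 < u \<and> u < 1 \<and> 0 < v \<and> v < 1 \<longrightarrow>
            J (\<gamma>, u, v) / Z = g \<gamma> * integral {0<..<1} (\<lambda>\<gamma>'. J (\<gamma>', u, v) / Z)))"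
  proof -
  have r0: "0 \<le> r" unfolding r_def by simp
  define c where "c = sqrt (2 * real n0 ^ 2 * real n1)"
  have c0: "c > 0" using assms unfolding c_def by simp
  have Jf: "\<forall>\<gamma> u v. 0 < \<gamma> \<and> \<gamma> < 1 \<and> 0 < u \<and> u < 1 \<and> 0 < v \<and> v < 1 \<longrightarrow>
          J (\<gamma>, u, v) = c * ((\<gamma> powr (-1/2) * (1 - \<gamma>) powr (-1/2) / (1 + \<gamma>))
             * sqrt (u + r * v) * u powr (-1/2) * (1 - u) powr (-1/2)
             * v powr (-1/2) * (1 - v) powr (-1/2))"
    unfolding J_def r_def c_def using J_formula[OF assms(1)] by blast
  have A: "J integrable_on C \<and> integral C J > 0
    \<and> (let Z = integral C J in
         (\<forall>\<gamma>. 0 < \<gamma> \<and> \<gamma> < 1 \<longrightarrow>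
            integral ({0<..<1} \<times> {0<..<1}) (\<lambda>(u, v). J (\<gamma>, u, v) / Z) = g \<gamma>)
       \<and> (\<forall>\<gamma> u v. 0 < \<gamma> \<and> \<gamma> < 1 \<and> 0 < u \<and> u < 1 \<and> 0 < v \<and> v < 1 \<longrightarrow>
            J (\<gamma>, u, v) / Z = g \<gamma> * integral {0<..<1} (\<lambda>\<gamma>'. J (\<gamma>', u, v) / Z)))"
    unfolding C_def g_def by (rule analysis_part[OF r0 c0 Jf])
  have B: "bij_betw dallal_reparam dallal_Omega C" unfolding C_def by (rule reparam_bij)
  show ?thesis using A B c0 Jf by blast
qed

end
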